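(* Let $X$ be a real Banach lattice equipped with a sufficiently rich topology $\tau$. If $C\subseteq X_+$ is $\tau$-compact, then its solid hull $\operatorname{so}(C)$ is $\tau$-closed.
   Context: A locally convex Hausdorff topology $\tau$ on a Banach lattice $X$ is called sufficiently rich if (i) the space $X^\tau$ of $\tau$-continuous linear functionals on $X$ is a Banach lattice (with lattice operations given by the Riesz–Kantorovich formulas), and (ii) $X_+$ is $\tau$-closed. $\operatorname{so}(C)$ is the set of all $z\in X$ for which there exists $x\in C$ with $|z|\le|x|$ (the smallest solid set containing $C$). *)

theory Defs
  imports "HOL-Analysis.Analysis"
begin

definition labs :: "'a::{lattice, ab_group_add} \<Rightarrow> 'a" where
  "labs x = sup x (- x)"

class banach_lattice = banach + ordered_real_vector + lattice +
  assumes lattice_norm: "sup x (- x) \<le> sup y (- y) \<Longrightarrow> norm x \<le> norm y"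

definition so :: "'a::banach_lattice set \<Rightarrow> 'a set" where
  "so C = {z. \<exists>x\<in>C. labs z \<le> labs x}"

definition lc_hausdorff_linear_topology :: "'a::real_vector topology \<Rightarrow> bool" where
  "lc_hausdorff_linear_topology \<tau> \<longleftrightarrow>
     topspace \<tau> = UNIV \<and> Hausdorff_space \<tau> \<and>
     continuous_map (prod_topology \<tau> \<tau>) \<tau> (\<lambda>(x, y). x + y) \<and>
     continuous_map (prod_topology euclideanreal \<tau>) \<tau> (\<lambda>(a, x). a *\<^sub>R x) \<and>
     (\<forall>U. openin \<tau> U \<and> 0 \<in> U \<longrightarrow> (\<exists>V. openin \<tau> V \<and> 0 \<in> V \<and> convex V \<and> V \<subseteq> U))"

definition tdual :: "'a::real_vector topology \<Rightarrow> ('a \<Rightarrow> real) set" where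
  "tdual \<tau> = {f. linear f \<and> continuous_map \<tau> euclideanreal f}"

text \<open>Riesz--Kantorovich formulas: positive part and modulus of a functional,
  on positive elements.\<close>
definition rk_pos :: "('a::banach_lattice \<Rightarrow> real) \<Rightarrow> 'a \<Rightarrow> real" where
  "rk_pos f x = Sup {f y | y. 0 \<le> y \<and> y \<le> x}"

definition rk_abs :: "('a::banach_lattice \<Rightarrow> real) \<Rightarrow> 'a \<Rightarrow> real" where
  "rk_abs f x = Sup {\<bar>f y\<bar> | y. labs y \<le> x}"

text \<open>\<open>X^\<tau>\<close> is a Banach lattice with the Riesz--Kantorovich lattice operations:
  every \<open>f \<in> X^\<tau>\<close> is order bounded and the Riesz--Kantorovich positive part of \<open>f\<close>
  (hence all Riesz--Kantorovich lattice operations) exists in \<open>X^\<tau>\<close>; and there is a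
  complete lattice norm on \<open>X^\<tau>\<close> (w.r.t. the order \<open>f \<le> g \<longleftrightarrow> f x \<le> g x\<close> for \<open>x \<ge> 0\<close>).\<close>
definition dual_is_banach_lattice :: "'a::banach_lattice topology \<Rightarrow> bool" where
  "dual_is_banach_lattice \<tau> \<longleftrightarrow>
     (\<forall>f\<in>tdual \<tau>. (\<forall>x. 0 \<le> x \<longrightarrow> bdd_above {f y | y. 0 \<le> y \<and> y \<le> x}) \<and>
        (\<exists>h\<in>tdual \<tau>. \<forall>x. 0 \<le> x \<longrightarrow> h x = rk_pos f x)) \<and>
     (\<exists>N :: ('a \<Rightarrow> real) \<Rightarrow> real.
        (\<forall>f\<in>tdual \<tau>. N f \<ge> 0 \<and> (N f = 0 \<longleftrightarrow> f = (\<lambda>_. 0))) \<and>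
        (\<forall>f\<in>tdual \<tau>. \<forall>c. N (\<lambda>x. c * f x) = \<bar>c\<bar> * N f) \<and>
        (\<forall>f\<in>tdual \<tau>. \<forall>g\<in>tdual \<tau>. N (\<lambda>x. f x + g x) \<le> N f + N g) \<and>
        (\<forall>f\<in>tdual \<tau>. \<forall>g\<in>tdual \<tau>.
            (\<forall>x. 0 \<le> x \<longrightarrow> rk_abs f x \<le> rk_abs g x) \<longrightarrow> N f \<le> N g) \<and>
        (\<forall>s. (\<forall>n. s n \<in> tdual \<tau>) \<and>
             (\<forall>e>0. \<exists>M. \<forall>m\<ge>M. \<forall>n\<ge>M. N (\<lambda>x. s m x - s n x) < e) \<longrightarrow>
             (\<exists>f\<in>tdual \<tau>. (\<lambda>n. N (\<lambda>x. s n x - f x)) \<longlonglongrightarrow> 0)))"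

definition sufficiently_rich :: "'a::banach_lattice topology \<Rightarrow> bool" where
  "sufficiently_rich \<tau> \<longleftrightarrow>
     lc_hausdorff_linear_topology \<tau> \<and> dual_is_banach_lattice \<tau> \<and>
     closedin \<tau> {x. 0 \<le> x}"

end

theory Submission
  imports Defs
begin

lemma labs_le_iff:
  fixes z x :: "'a::banach_lattice"
  shows "labs z \<le> x \<longleftrightarrow> 0 \<le> x - z \<and> 0 \<le> x + z"
  unfolding labs_def
  by (metis add.commute diff_ge_0_iff_ge le_sup_iff minus_add_cancel diff_minus_eq_add)

lemma labs_pos:
  fixes x :: "'a::banach_lattice"
  assumes "0 \<le> x" shows "labs x = x"
proof -
  have "- x \<le> x" using assms by (meson neg_le_0_iff_le order_trans)
  thus ?thesis unfolding labs_def by (simp add: sup_absorb1)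
qed

theorem mainTheorem10:
  fixes \<tau> :: "'a::banach_lattice topology" and C :: "'a set"
  assumes "sufficiently_rich \<tau>"
    and "C \<subseteq> {x. 0 \<le> x}"
    and "compactin \<tau> C"
  shows "closedin \<tau> (so C)"
proof -
  have lc: "topspace \<tau> = UNIV"
    and add: "continuous_map (prod_topology \<tau> \<tau>) \<tau> (\<lambda>(x, y). x + y)"
    and sc: "continuous_map (prod_topology euclideanreal \<tau>) \<tau> (\<lambda>(a, x). a *\<^sub>R x)"
    and pos: "closedin \<tau> {x. 0 \<le> x}"
    using assms(1) unfolding sufficiently_rich_def lc_hausdorff_linear_topology_def by auto
  define Y where "Y = subtopology \<tau> C"
  have cY: "compact_space Y" unfolding Y_def
    using assms(3) by (simp add: compact_space_subtopology)
  have tY: "topspace Y = C" unfolding Y_def using lc by simp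
  have fstc: "continuous_map (prod_topology \<tau> Y) \<tau> fst"
    by (rule continuous_map_fst)
  have sndc: "continuous_map (prod_topology \<tau> Y) \<tau> snd"
    unfolding Y_def using continuous_map_snd continuous_map_from_subtopology
    by (metis continuous_map_compose continuous_map_id continuous_map_in_subtopology id_comp)
  have negc: "continuous_map (prod_topology \<tau> Y) \<tau> (\<lambda>p. (-1::real) *\<^sub>R fst p)"
  proof -
    have "continuous_map (prod_topology \<tau> Y) (prod_topology euclideanreal \<tau>) (\<lambda>p. ((-1::real), fst p))"
      using fstc by (simp add: continuous_map_pairwise o_def)
    from continuous_map_compose[OF this sc] show ?thesis by (simp add: o_def)
  qed
  have c1: "continuous_map (prod_topology \<tau> Y) \<tau> (\<lambda>p. snd p - fst p)"
  proof -
    have "continuous_map (prod_topology \<tau> Y) (prod_topology \<tau> \<tau>) (\<lambda>p. (snd p, (-1::real) *\<^sub>R fst p))"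
      using sndc negc by (simp add: continuous_map_pairwise o_def)
    from continuous_map_compose[OF this add] show ?thesis by (simp add: o_def)
  qed
  have c2: "continuous_map (prod_topology \<tau> Y) \<tau> (\<lambda>p. snd p + fst p)"
  proof -
    have "continuous_map (prod_topology \<tau> Y) (prod_topology \<tau> \<tau>) (\<lambda>p. (snd p, fst p))"
      using sndc fstc by (simp add: continuous_map_pairwise o_def)
    from continuous_map_compose[OF this add] show ?thesis by (simp add: o_def)
  qed
  define S where "S = {p \<in> topspace (prod_topology \<tau> Y). (\<lambda>p. snd p - fst p) p \<in> {x. 0 \<le> x}}
     \<inter> {p \<in> topspace (prod_topology \<tau> Y). (\<lambda>p. snd p + fst p) p \<in> {x. 0 \<le> x}}"
  have clS: "closedin (prod_topology \<tau> Y) S"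
    unfolding S_def
    by (intro closedin_Int closedin_continuous_map_preimage[OF c1 pos] closedin_continuous_map_preimage[OF c2 pos])
  have "closedin \<tau> (fst ` S)"
    using closed_map_fst[OF cY] clS unfolding closed_map_def by blast
  moreover have "fst ` S = so C"
  proof
    show "fst ` S \<subseteq> so C"
    proof
      fix z assume "z \<in> fst ` S"
      then obtain x where "(z, x) \<in> S" by force
      then have x: "x \<in> C" "0 \<le> x - z" "0 \<le> x + z"
        unfolding S_def by (auto simp: tY lc)
      then show "z \<in> so C" unfolding so_def
        using labs_le_iff labs_pos assms(2) by fastforce
    qed
    show "so C \<subseteq> fst ` S"
    proof
      fix z assume "z \<in> so C"
      then obtain x where x: "x \<in> C" "labs z \<le> labs x" unfolding so_def by auto
      then have "labs z \<le> x" using labs_pos assms(2) by force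
      then have "(z, x) \<in> S" unfolding S_def using x labs_le_iff[of z x]
        by (auto simp: tY lc)
      then show "z \<in> fst ` S" by force
    qed
  qed
  ultimately show ?thesis by simp
qed

end
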